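(* Let $E/\mathbb{Q}$ be the elliptic curve $y^2=x^3+a_4x+a_6$ with $a_4,a_6\in\mathbb{Z}$. Suppose $(u,v)\in\mathbb{Z}^2$ is map-suitable for $E$ and $-D_E(u,v)$ is a negative fundamental discriminant. Then: (1) $v$ is square-free and $\gcd(u,v)=1$. (2) If $P\in E(\mathbb{Q})$ is not the point at infinity $\mathcal{O}$, there exist $A,B,C\in\mathbb{Z}$ with $\gcd(A,C)=\gcd(B,C)=1$ and $C>0$ such that $P=(A/C^2,B/C^3)$; putting $a=Av+C^2u$ and $g=\gcd(C,v)$, there exists an integer $\mu$ with $\frac{C^3}{g^2}\mu\equiv1\pmod{\frac{va}{g^2}}$. (3) For any such $\mu$, the form $$\frac{va}{g^2}x^2+2\mu\frac{Bv^2}{g^2}xy+\frac{\mu^2\frac{B^2v^4}{g^4}+d_E(u,v)}{\frac{va}{g^2}}y^2$$ is a positive definite binary quadratic form with integer coefficients and discriminant $-D_E(u,v)$.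
   Context: For integers $u,v$ put $d_E(u,v):=v(u^3+a_4uv^2-a_6v^3)$ and $D_E(u,v):=4d_E(u,v)$. A pair $(u,v)\in\mathbb{Z}^2$ is map-suitable for $E$ if $u$, $v$, $3u^2+a_4v^2$ and $D_E(u,v)$ are all positive. *)

theory Defs
  imports Complex_Main "HOL-Computational_Algebra.Squarefree" "HOL-Number_Theory.Cong"
begin

definition d_E :: "int \<Rightarrow> int \<Rightarrow> int \<Rightarrow> int \<Rightarrow> int" where
  "d_E a4 a6 u v = v * (u^3 + a4*u*v^2 - a6*v^3)"

definition D_E :: "int \<Rightarrow> int \<Rightarrow> int \<Rightarrow> int \<Rightarrow> int" where
  "D_E a4 a6 u v = 4 * d_E a4 a6 u v"

definition map_suitable :: "int \<Rightarrow> int \<Rightarrow> int \<Rightarrow> int \<Rightarrow> bool" where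
  "map_suitable a4 a6 u v \<longleftrightarrow> u > 0 \<and> v > 0 \<and> 3*u^2 + a4*v^2 > 0 \<and> D_E a4 a6 u v > 0"

definition fundamental_discriminant :: "int \<Rightarrow> bool" where
  "fundamental_discriminant D \<longleftrightarrow> D \<noteq> 1 \<and>
     ((D mod 4 = 1 \<and> squarefree D) \<or>
      (\<exists>m. D = 4*m \<and> (m mod 4 = 2 \<or> m mod 4 = 3) \<and> squarefree m))"

definition pos_def_form :: "real \<Rightarrow> real \<Rightarrow> real \<Rightarrow> bool" where
  "pos_def_form a b c \<longleftrightarrow> (\<forall>x y. (x, y) \<noteq> (0, 0) \<longrightarrow> a*x^2 + b*x*y + c*y^2 > 0)"

end

theory Submission
  imports Defs
begin


lemma coprime_add_multI:
  fixes m n k :: int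
  assumes "coprime m n" shows "coprime m (k*m + n)"
  using assms by (simp add: coprime_iff_gcd_eq_1 gcd_add_mult)

lemma pos_a:
  fixes A B C u v a4 a6 :: int
  assumes u: "u>0" and v: "v>0" and h3: "3*u^2+a4*v^2>0" and hd: "u^3+a4*u*v^2-a6*v^3>0"
    and C: "C>0" and cv: "B^2 = A^3+a4*A*C^4+a6*C^6"
  shows "A*v + C^2*u > 0"
proof (rule ccontr)
  assume neg: "\<not> A*v + C^2*u > 0"
  define X where "X = A*v"
  define S where "S = -(C^2*u)"
  define w where "w = v*C^2"
  have XS: "X \<le> S" using neg unfolding X_def S_def by simp
  have S0: "S < 0" using u C unfolding S_def by simp
  have FX: "X^3 + a4*w^2*X + a6*w^3 = v^3*B^2" unfolding X_def w_def using cv by algebra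
  have FS: "S^3 + a4*w^2*S + a6*w^3 = - (C^6*(u^3+a4*u*v^2-a6*v^3))" unfolding S_def w_def by algebra
  have "C^6*(u^3+a4*u*v^2-a6*v^3) > 0" using C hd by simp
  hence FSn: "S^3 + a4*w^2*S + a6*w^3 < 0" using FS by linarith
  have D3: "3*S^2 + a4*w^2 = C^4*(3*u^2+a4*v^2)" unfolding S_def w_def by algebra
  have "C^4*(3*u^2+a4*v^2) > 0" using C h3 by simp
  hence D3p: "3*S^2 + a4*w^2 > 0" using D3 by linarith
  have "(-S)^2 \<le> (-X)^2" using XS S0 by (intro power_mono) auto
  hence X2: "S^2 \<le> X^2" by simp
  have "0 \<le> S*(X - S)" using XS S0 by (intro mult_nonpos_nonpos) auto
  hence XS2: "S^2 \<le> X*S" by (simp add: algebra_simps power2_eq_square)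
  have Q: "X^2 + X*S + S^2 + a4*w^2 > 0" using X2 XS2 D3p by linarith
  have diff: "(X^3 + a4*w^2*X + a6*w^3) - (S^3 + a4*w^2*S + a6*w^3) = (X - S)*(X^2 + X*S + S^2 + a4*w^2)"
    by algebra
  have "(X - S)*(X^2 + X*S + S^2 + a4*w^2) \<le> 0" using XS Q by (intro mult_nonpos_nonneg) auto
  hence "v^3*B^2 < 0" using diff FSn FX by linarith
  moreover have "v^3*B^2 \<ge> 0" using v by simp
  ultimately show False by linarith
qed

lemma sqd:
  assumes "fundamental_discriminant (- D_E a4 a6 u v)"
  shows "squarefree (d_E a4 a6 u v)"
proof -
  define d where "d = d_E a4 a6 u v"
  have "(- (4*d)) mod 4 = 0" by presburger
  then obtain m where "- (4*d) = 4*m" "squarefree m"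
    using assms unfolding fundamental_discriminant_def D_E_def d_def[symmetric] by auto
  hence "m = -d" "squarefree m" by auto
  thus ?thesis unfolding d_def by (simp add: squarefree_minus)
qed

lemma part1:
  fixes a4 a6 u v :: int
  assumes "squarefree (d_E a4 a6 u v)"
  shows "squarefree v \<and> gcd u v = 1"
proof
  show "squarefree v" using assms unfolding d_E_def by (rule squarefree_mono[rotated]) simp
  define g where "g = gcd u v"
  have gv: "g dvd v" and gu: "g dvd u" unfolding g_def by auto
  have "g dvd u^3 + a4*u*v^2 - a6*v^3" using gv gu
    by (intro dvd_diff dvd_add) (auto simp: power3_eq_cube power2_eq_square)
  hence "g*g dvd d_E a4 a6 u v" unfolding d_E_def using gv by (intro mult_dvd_mono)
  hence "g dvd 1" using assms squarefreeD[of "d_E a4 a6 u v" g] by (simp add: power2_eq_square)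
  moreover have "g \<ge> 0" unfolding g_def by simp
  ultimately show "gcd u v = 1" unfolding g_def by simp
qed

lemma posdef:
  fixes a b c :: int
  assumes a: "a>0" and disc: "b^2 - 4*a*c < 0"
  shows "pos_def_form (of_int a) (of_int b) (of_int c)"
  unfolding pos_def_form_def
proof (intro allI impI)
  fix x y :: real
  assume xy: "(x, y) \<noteq> (0, 0)"
  define Q where "Q = real_of_int a * x^2 + of_int b * x * y + of_int c * y^2"
  have ar: "real_of_int a > 0" using a by simp
  have "4*a*c - b^2 > 0" using disc by linarith
  hence dr: "real_of_int (4*a*c - b^2) > 0" by (simp only: of_int_0_less_iff)
  have id: "4 * of_int a * Q = (2*of_int a*x + of_int b*y)^2 + real_of_int (4*a*c - b^2) * y^2"
    unfolding Q_def by (simp add: algebra_simps power2_eq_square)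
  have "4 * of_int a * Q > 0"
  proof (cases "y = 0")
    case True
    hence "x \<noteq> 0" using xy by simp
    hence "(2*of_int a*x + of_int b*y)^2 > 0" using True ar by simp
    thus ?thesis using id True by simp
  next
    case False
    hence "real_of_int (4*a*c - b^2) * y^2 > 0" using dr by simp
    moreover have "(2*of_int a*x + of_int b*y)^2 \<ge> 0" by simp
    ultimately show ?thesis using id by linarith
  qed
  thus "real_of_int a * x^2 + of_int b * x * y + of_int c * y^2 > 0"
    using ar Q_def by (simp add: zero_less_mult_iff)
qed

lemma cube_sq:
  fixes q m :: int
  assumes e: "q^2 = m^3" and m: "m > 0" and q: "q > 0"
  shows "\<exists>k>0. m = k^2 \<and> q = k^3"
proof -
  define g where "g = gcd q m"
  have g0: "g > 0" using m g_def by simp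
  obtain q' where q': "q = g*q'" using g_def by (meson gcd_dvd1 dvdE)
  obtain m' where m': "m = g*m'" using g_def by (meson gcd_dvd2 dvdE)
  have "g * gcd q' m' = g * 1"
  proof -
    have "g * gcd q' m' = gcd (g*q') (g*m')" using gcd_mult_distrib_int[of g q' m'] g0 by simp
    also have "\<dots> = g" using q' m' g_def by metis
    finally show ?thesis by simp
  qed
  hence cop: "coprime q' m'" using g0 by (simp add: coprime_iff_gcd_eq_1)
  have "g^2 * q'^2 = g^2 * (g * m'^3)" using e q' m' by (simp add: power_mult_distrib power3_eq_cube power2_eq_square algebra_simps)
  hence e2: "q'^2 = g*m'^3" using g0 by simp
  have "m' dvd q'^2" using e2 by (simp add: power3_eq_cube)
  moreover have "coprime m' (q'^2)" using cop by (simp add: coprime_commute)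
  ultimately have "m' dvd 1" by (metis coprime_dvd_mult_right_iff mult.right_neutral)
  moreover have "m' > 0" using m m' g0 by (simp add: zero_less_mult_iff)
  ultimately have "m' = 1" by simp
  hence "m = g" "q'^2 = g" using m' e2 by auto
  moreover have "q' > 0" using q q' g0 by (simp add: zero_less_mult_iff)
  ultimately show ?thesis using q' by (intro exI[of _ q']) (auto simp: power2_eq_square power3_eq_cube)
qed

lemma rep:
  fixes x y :: rat and a4 a6 :: int
  assumes cv: "y^2 = x^3 + of_int a4 * x + of_int a6"
  shows "\<exists>A B C::int. coprime A C \<and> coprime B C \<and> C>0 \<and> x = of_int A / of_int (C^2) \<and>
     y = of_int B / of_int (C^3) \<and> B^2 = A^3 + a4*A*C^4 + a6*C^6"
proof -
  obtain n m where x: "quotient_of x = (n,m)" by (cases "quotient_of x")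
  obtain p q where y: "quotient_of y = (p,q)" by (cases "quotient_of y")
  have m0: "m > 0" and cnm: "coprime n m" and xe: "x = of_int n / of_int m"
    using x quotient_of_denom_pos quotient_of_coprime quotient_of_div by blast+
  have q0: "q > 0" and cpq: "coprime p q" and ye: "y = of_int p / of_int q"
    using y quotient_of_denom_pos quotient_of_coprime quotient_of_div by blast+
  define K where "K = n^3 + a4*n*m^2 + a6*m^3"
  have "(of_int p / of_int q)^2 = (of_int n / of_int m)^3 + of_int a4 * (of_int n / of_int m) + (of_int a6::rat)"
    using cv xe ye by simp
  moreover have "(of_int n / of_int m)^3 + of_int a4 * (of_int n / of_int m) + of_int a6 = (of_int K / of_int (m^3) :: rat)"
    unfolding K_def using m0 by (simp add: field_simps power3_eq_cube power2_eq_square)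
  moreover have "(of_int p / of_int q)^2 = (of_int (p^2) / of_int (q^2) :: rat)" by (simp add: power_divide)
  ultimately have "(of_int (p^2) / of_int (q^2) :: rat) = of_int K / of_int (m^3)" by simp
  hence "(of_int (p^2) * of_int (m^3) :: rat) = of_int K * of_int (q^2)"
    using m0 q0 by (simp add: frac_eq_eq)
  hence eq: "p^2*m^3 = q^2*K" by (simp only: of_int_mult[symmetric] of_int_eq_iff mult.commute)
  have cKm: "coprime K m"
  proof -
    have "K = (a4*n*m + a6*m^2)*m + n^3" unfolding K_def by (simp add: power2_eq_square power3_eq_cube algebra_simps)
    moreover have "coprime m (n^3)" using cnm by (simp add: coprime_commute)
    ultimately show ?thesis using coprime_add_multI[of m "n^3" "a4*n*m + a6*m^2"] by (simp add: coprime_commute)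
  qed
  have d1: "q^2 dvd m^3"
  proof -
    have "q^2 dvd p^2*m^3" using eq by simp
    moreover have "coprime (q^2) (p^2)" using cpq by (simp add: coprime_commute)
    ultimately show ?thesis using coprime_dvd_mult_right_iff by blast
  qed
  have d2: "m^3 dvd q^2"
  proof -
    have "m^3 dvd q^2*K" using eq by (metis dvd_triv_right)
    moreover have "coprime (m^3) K" using cKm by (simp add: coprime_commute)
    ultimately show ?thesis using coprime_dvd_mult_left_iff by blast
  qed
  have "q^2 = m^3" using d1 d2 m0 q0 by (simp add: zdvd_antisym_nonneg)
  then obtain k where k: "k > 0" "m = k^2" "q = k^3" using cube_sq m0 q0 by blast
  show ?thesis
  proof (intro exI conjI)
    show "coprime n k" using cnm k by simp
    show "coprime p k" using cpq k by simp
    show "k > 0" by fact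
    show "x = of_int n / of_int (k^2)" using xe k by simp
    show "y = of_int p / of_int (k^3)" using ye k by simp
    show "p^2 = n^3 + a4*n*k^4 + a6*k^6"
    proof -
      have h: "(k^2)^3 = k^6" "(k^3)^2 = k^6" "(k^2)^2 = k^4" by (simp_all flip: power_mult)
      have "k^6 * p^2 = k^6 * (n^3 + a4*n*k^4 + a6*k^6)"
        using eq unfolding k K_def h by (simp add: mult.commute)
      thus ?thesis using k by simp
    qed
  qed
qed



lemma main_int:
  fixes A B C u v a4 a6 :: int
  assumes v: "v>0" and sqv: "squarefree v" and C: "C>0" and cAC: "coprime A C"
    and cv: "B^2 = A^3+a4*A*C^4+a6*C^6" and apos: "A*v + C^2*u > 0" and dpos: "d_E a4 a6 u v > 0"
  shows "(let a = A*v + C^2*u; g = gcd C v in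
           (\<exists>\<mu>::int. [(C^3 div g^2) * \<mu> = 1] (mod (v*a div g^2))) \<and>
           (\<forall>\<mu>::int. [(C^3 div g^2) * \<mu> = 1] (mod (v*a div g^2)) \<longrightarrow>
              (let qa = of_int (v*a) / of_int (g^2) :: rat;
                   qb = 2 * of_int \<mu> * of_int (B*v^2) / of_int (g^2);
                   qc = (of_int \<mu>^2 * of_int (B^2*v^4) / of_int (g^4) + of_int (d_E a4 a6 u v)) / qa
               in qa \<in> \<int> \<and> qb \<in> \<int> \<and> qc \<in> \<int> \<and>
                  pos_def_form (of_rat qa) (of_rat qb) (of_rat qc) \<and>
                  qb^2 - 4*qa*qc = - of_int (D_E a4 a6 u v))))"
proof -
  define a where "a = A*v + C^2*u"
  define g where "g = gcd C v"
  define d where "d = d_E a4 a6 u v"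
  have g0: "g > 0" using C g_def by simp
  obtain v' where v': "v = g*v'" using g_def by (meson gcd_dvd2 dvdE)
  obtain C' where C': "C = g*C'" using g_def by (meson gcd_dvd1 dvdE)
  have cCv: "coprime C' v'"
  proof -
    have "g * gcd C' v' = gcd (g*C') (g*v')" using gcd_mult_distrib_int[of g C' v'] g0 by simp
    also have "\<dots> = g" using C' v' g_def by metis
    finally show ?thesis using g0 by (simp add: coprime_iff_gcd_eq_1)
  qed
  have cgv: "coprime g v'"
  proof -
    define h where "h = gcd g v'"
    have "h*h dvd g*v'" unfolding h_def by (intro mult_dvd_mono) auto
    hence "h dvd 1" using sqv squarefreeD[of v h] v' by (simp add: power2_eq_square)
    thus ?thesis unfolding h_def by (simp add: coprime_iff_gcd_eq_1)
  qed
  define a' where "a' = A*v' + g*C'^2*u"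
  have a_eq: "a = g*a'" unfolding a_def a'_def v' C' by algebra
  have vp: "v' > 0" using v v' g0 by (simp add: zero_less_mult_iff)
  have ap: "a' > 0" using apos a_eq g0 a_def by (simp add: zero_less_mult_iff)
  define M where "M = v'*a'"
  have Mp: "M > 0" using vp ap M_def by simp
  have g2: "g^2 \<noteq> 0" using g0 by simp
  have va: "v*a = g^2 * M" unfolding M_def v' a_eq by algebra
  have M_eq: "v*a div g^2 = M" using va g2 by simp
  have C3: "C^3 = g^2 * (g*C'^3)" unfolding C' by algebra
  have N_eq: "C^3 div g^2 = g*C'^3" using C3 g2 by simp
  have cAg: "coprime A g" and cAC': "coprime A C'" using cAC C' by auto
  have cga': "coprime g a'"
  proof -
    have "coprime g (A*v')" using cAg cgv by (simp add: coprime_commute)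
    hence "coprime g ((C'^2*u)*g + A*v')" by (rule coprime_add_multI)
    moreover have "(C'^2*u)*g + A*v' = a'" unfolding a'_def by algebra
    ultimately show ?thesis by simp
  qed
  have cCa': "coprime C' a'"
  proof -
    have "coprime C' (A*v')" using cAC' cCv by (simp add: coprime_commute)
    hence "coprime C' ((g*C'*u)*C' + A*v')" by (rule coprime_add_multI)
    moreover have "(g*C'*u)*C' + A*v' = a'" unfolding a'_def by algebra
    ultimately show ?thesis by simp
  qed
  have cop: "coprime (g*C'^3) M"
    unfolding M_def using cgv cga' cCv cCa' by simp
  have ex: "\<exists>\<mu>::int. [(C^3 div g^2) * \<mu> = 1] (mod (v*a div g^2))"
    unfolding M_eq N_eq using cong_solve_coprime_int[OF cop] .
  define E' where "E' = a'^2 - 3*a'*g*C'^2*u + 3*g^2*C'^4*u^2 + a4*v'^2*g^4*C'^4"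
  have key: "v'^4*B^2 + g^2*C'^6*d = M*E'"
    unfolding M_def E'_def a'_def d_def d_E_def v' using cv unfolding C' by algebra
  have all: "[(C^3 div g^2) * \<mu> = 1] (mod (v*a div g^2)) \<longrightarrow>
              (let qa = of_int (v*a) / of_int (g^2) :: rat;
                   qb = 2 * of_int \<mu> * of_int (B*v^2) / of_int (g^2);
                   qc = (of_int \<mu>^2 * of_int (B^2*v^4) / of_int (g^4) + of_int (d_E a4 a6 u v)) / qa
               in qa \<in> \<int> \<and> qb \<in> \<int> \<and> qc \<in> \<int> \<and>
                  pos_def_form (of_rat qa) (of_rat qb) (of_rat qc) \<and>
                  qb^2 - 4*qa*qc = - of_int (D_E a4 a6 u v))" for \<mu>
  proof
    assume "[(C^3 div g^2) * \<mu> = 1] (mod (v*a div g^2))"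
    hence "M dvd g*C'^3*\<mu> - 1" unfolding M_eq N_eq by (simp add: cong_iff_dvd_diff)
    then obtain t where t: "g*C'^3*\<mu> - 1 = M*t" by (elim dvdE)
    define N where "N = \<mu>^2*B^2*v'^4 + d"
    have "(g*C'^3)^2 * N = M*(E' + (2*t + M*t^2)*B^2*v'^4)"
      unfolding N_def using key t by algebra
    hence "M dvd (g*C'^3)^2 * N" by simp
    moreover have "coprime M ((g*C'^3)^2)" using cop by (simp add: coprime_commute)
    ultimately have "M dvd N" using coprime_dvd_mult_right_iff by blast
    then obtain c' where c': "N = M*c'" by (elim dvdE)
    define b' where "b' = 2*\<mu>*B*v'^2"
    have qa: "(of_int (v*a) / of_int (g^2) :: rat) = of_int M" using va g2 by simp
    have qb: "2 * of_int \<mu> * of_int (B*v^2) / of_int (g^2) = (of_int b' :: rat)"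
    proof -
      have "B*v^2 = g^2 * (B*v'^2)" unfolding v' by algebra
      hence e: "(of_int (B*v^2)::rat) = of_int (g^2) * of_int (B*v'^2)" by (simp only: of_int_mult)
      have "2 * of_int \<mu> * of_int (B*v^2) / of_int (g^2) = (of_int (2*\<mu>*(B*v'^2)) :: rat)"
        unfolding e using g2 by (simp add: field_simps)
      thus ?thesis unfolding b'_def by (simp add: mult.assoc)
    qed
    have qc: "(of_int \<mu>^2 * of_int (B^2*v^4) / of_int (g^4) + of_int (d_E a4 a6 u v)) / of_int M = (of_int c' :: rat)"
    proof -
      have "B^2*v^4 = g^4 * (B^2*v'^4)" unfolding v' by algebra
      hence e: "(of_int (B^2*v^4)::rat) = of_int (g^4) * of_int (B^2*v'^4)" by (simp only: of_int_mult)
      have g4: "(of_int (g^4)::rat) \<noteq> 0" using g0 by simp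
      have "(of_int \<mu>^2 * of_int (B^2*v^4) / of_int (g^4) + of_int (d_E a4 a6 u v) :: rat)
          = of_int \<mu>^2 * of_int (B^2*v'^4) + of_int d"
        unfolding e d_def using g4 by (simp add: field_simps)
      also have "\<dots> = of_int N" unfolding N_def by simp
      finally have "(of_int \<mu>^2 * of_int (B^2*v^4) / of_int (g^4) + of_int (d_E a4 a6 u v) :: rat) = of_int N" .
      thus ?thesis using c' Mp by simp
    qed
    have disc: "b'^2 - 4*M*c' = - D_E a4 a6 u v"
      unfolding b'_def D_E_def d_def[symmetric] using c' N_def by algebra
    have dp: "D_E a4 a6 u v > 0" using dpos unfolding D_E_def by simp
    have pd: "pos_def_form (of_int M) (of_int b') (of_int c')"
      using posdef[of M b' c'] Mp disc dp by simp
    show "let qa = of_int (v*a) / of_int (g^2) :: rat;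
                   qb = 2 * of_int \<mu> * of_int (B*v^2) / of_int (g^2);
                   qc = (of_int \<mu>^2 * of_int (B^2*v^4) / of_int (g^4) + of_int (d_E a4 a6 u v)) / qa
               in qa \<in> \<int> \<and> qb \<in> \<int> \<and> qc \<in> \<int> \<and>
                  pos_def_form (of_rat qa) (of_rat qb) (of_rat qc) \<and>
                  qb^2 - 4*qa*qc = - of_int (D_E a4 a6 u v)"
      unfolding Let_def qa qb qc
    proof (intro conjI)
      show "pos_def_form (of_rat (of_int M)) (of_rat (of_int b')) (of_rat (of_int c'))"
        using pd by (simp only: of_rat_of_int_eq)
      have "(of_int (b'^2 - 4*M*c') :: rat) = of_int (- D_E a4 a6 u v)" using disc by simp
      thus "(of_int b')^2 - 4 * of_int M * of_int c' = - (of_int (D_E a4 a6 u v) :: rat)" by simp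
    qed auto
  qed
  show ?thesis unfolding a_def[symmetric] g_def[symmetric]
    apply (subst Let_def, subst Let_def)
    by (intro conjI allI ex all)
qed


theorem lemma2p2:
  fixes a4 a6 u v :: int
  assumes nonsing: "4*a4^3 + 27*a6^2 \<noteq> 0"
    and suit: "map_suitable a4 a6 u v"
    and fund: "fundamental_discriminant (- D_E a4 a6 u v)"
  shows "(squarefree v \<and> gcd u v = 1) \<and>
    (\<forall>x y :: rat. y^2 = x^3 + of_int a4 * x + of_int a6 \<longrightarrow>
      (\<exists>A B C :: int. gcd A C = 1 \<and> gcd B C = 1 \<and> C > 0 \<and>
         x = of_int A / of_int (C^2) \<and> y = of_int B / of_int (C^3) \<and>
         (let a = A*v + C^2*u; g = gcd C v in
           (\<exists>\<mu>::int. [(C^3 div g^2) * \<mu> = 1] (mod (v*a div g^2))) \<and>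
           (\<forall>\<mu>::int. [(C^3 div g^2) * \<mu> = 1] (mod (v*a div g^2)) \<longrightarrow>
              (let qa = of_int (v*a) / of_int (g^2) :: rat;
                   qb = 2 * of_int \<mu> * of_int (B*v^2) / of_int (g^2);
                   qc = (of_int \<mu>^2 * of_int (B^2*v^4) / of_int (g^4) + of_int (d_E a4 a6 u v)) / qa
               in qa \<in> \<int> \<and> qb \<in> \<int> \<and> qc \<in> \<int> \<and>
                  pos_def_form (of_rat qa) (of_rat qb) (of_rat qc) \<and>
                  qb^2 - 4*qa*qc = - of_int (D_E a4 a6 u v))))))"
proof -
  have u: "u > 0" and v: "v > 0" and h3: "3*u^2 + a4*v^2 > 0" and Dp: "D_E a4 a6 u v > 0"
    using suit unfolding map_suitable_def by auto
  have dpos: "d_E a4 a6 u v > 0" using Dp unfolding D_E_def by simp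
  have hd: "u^3 + a4*u*v^2 - a6*v^3 > 0" using dpos v unfolding d_E_def by (simp add: zero_less_mult_iff)
  have sq: "squarefree (d_E a4 a6 u v)" using sqd[OF fund] .
  have p1: "squarefree v \<and> gcd u v = 1" using part1[OF sq] .
  show ?thesis
  proof (intro conjI allI impI)
    show "squarefree v" "gcd u v = 1" using p1 by auto
  next
    fix x y :: rat
    assume cv: "y^2 = x^3 + of_int a4 * x + of_int a6"
    obtain A B C where cAC: "coprime A C" and cBC: "coprime B C" and C0: "C > 0"
      and xe: "x = of_int A / of_int (C^2)" and ye: "y = of_int B / of_int (C^3)"
      and cvi: "B^2 = A^3 + a4*A*C^4 + a6*C^6"
      using rep[OF cv] by blast
    have apos: "A*v + C^2*u > 0" using pos_a[OF u v h3 hd C0 cvi] .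
    have L: "(let a = A*v + C^2*u; g = gcd C v in
           (\<exists>\<mu>::int. [(C^3 div g^2) * \<mu> = 1] (mod (v*a div g^2))) \<and>
           (\<forall>\<mu>::int. [(C^3 div g^2) * \<mu> = 1] (mod (v*a div g^2)) \<longrightarrow>
              (let qa = of_int (v*a) / of_int (g^2) :: rat;
                   qb = 2 * of_int \<mu> * of_int (B*v^2) / of_int (g^2);
                   qc = (of_int \<mu>^2 * of_int (B^2*v^4) / of_int (g^4) + of_int (d_E a4 a6 u v)) / qa
               in qa \<in> \<int> \<and> qb \<in> \<int> \<and> qc \<in> \<int> \<and>
                  pos_def_form (of_rat qa) (of_rat qb) (of_rat qc) \<and>
                  qb^2 - 4*qa*qc = - of_int (D_E a4 a6 u v))))"
      using main_int[OF v conjunct1[OF p1] C0 cAC cvi apos dpos] .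
    show "\<exists>A B C :: int. gcd A C = 1 \<and> gcd B C = 1 \<and> C > 0 \<and>
         x = of_int A / of_int (C^2) \<and> y = of_int B / of_int (C^3) \<and>
         (let a = A*v + C^2*u; g = gcd C v in
           (\<exists>\<mu>::int. [(C^3 div g^2) * \<mu> = 1] (mod (v*a div g^2))) \<and>
           (\<forall>\<mu>::int. [(C^3 div g^2) * \<mu> = 1] (mod (v*a div g^2)) \<longrightarrow>
              (let qa = of_int (v*a) / of_int (g^2) :: rat;
                   qb = 2 * of_int \<mu> * of_int (B*v^2) / of_int (g^2);
                   qc = (of_int \<mu>^2 * of_int (B^2*v^4) / of_int (g^4) + of_int (d_E a4 a6 u v)) / qa
               in qa \<in> \<int> \<and> qb \<in> \<int> \<and> qc \<in> \<int> \<and>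
                  pos_def_form (of_rat qa) (of_rat qb) (of_rat qc) \<and>
                  qb^2 - 4*qa*qc = - of_int (D_E a4 a6 u v))))"
      apply (rule exI[of _ A], rule exI[of _ B], rule exI[of _ C])
      apply (intro conjI)
      subgoal using cAC by (simp add: coprime_iff_gcd_eq_1)
      subgoal using cBC by (simp add: coprime_iff_gcd_eq_1)
      subgoal by (rule C0)
      subgoal by (rule xe)
      subgoal by (rule ye)
      subgoal by (rule L)
      done
  qed
qed

end
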